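(* There is a constant $C_d$ depending only on $d$ such that the following holds. Let $B\subset\mathbb{R}^d$ be an open ball of radius $r$ and $\tilde B$ the ball with the same center and radius $2r$. Let $M\ge\frac1{4r^2}$ and $\delta>0$. Let $F\in C^2(\tilde B)$ satisfy $\sup_{|\beta|=2,\,x\in\tilde B}|\partial_\beta F(x)|\le M$. Let $S$ be the set of $x\in B$ with $$\langle\!\langle F(x)\rangle\!\rangle<\delta\qquad\text{and}\qquad\|\nabla F(x)\|\ge\sqrt{dM}.$$ Then $|S|\le C_d\,\delta\,|B|$.
   Context: $\langle\!\langle t\rangle\!\rangle$ is the distance from $t\in\mathbb{R}$ to the nearest integer; $\nabla F(x)$ is the gradient and $\|\cdot\|$ the sup-norm on $\mathbb{R}^d$; $|\cdot|$ is Lebesgue measure; $\partial_\beta$ are partial derivatives with multiindex $\beta$ of order $|\beta|$. *)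

theory Defs
  imports "HOL-Analysis.Analysis"
begin

definition dist_int :: "real \<Rightarrow> real" where
  "dist_int t = \<bar>t - of_int (round t)\<bar>"

definition partial :: "'n::finite \<Rightarrow> (real^'n \<Rightarrow> real) \<Rightarrow> real^'n \<Rightarrow> real" where
  "partial i f x = deriv (\<lambda>t. f (x + t *\<^sub>R axis i 1)) 0"

definition has_partial_on :: "'n::finite \<Rightarrow> (real^'n \<Rightarrow> real) \<Rightarrow> (real^'n) set \<Rightarrow> bool" where
  "has_partial_on i f U \<longleftrightarrow> (\<forall>x\<in>U. (\<lambda>t. f (x + t *\<^sub>R axis i 1)) differentiable (at 0))"

definition C2_on :: "(real^'n::finite \<Rightarrow> real) \<Rightarrow> (real^'n) set \<Rightarrow> bool" where
  "C2_on f U \<longleftrightarrow> continuous_on U f \<and>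
     (\<forall>i. has_partial_on i f U \<and> continuous_on U (partial i f)) \<and>
     (\<forall>i j. has_partial_on j (partial i f) U \<and> continuous_on U (partial j (partial i f)))"

definition grad :: "(real^'n::finite \<Rightarrow> real) \<Rightarrow> real^'n \<Rightarrow> real^'n" where
  "grad f x = (\<chi> i. partial i f x)"

definition supnorm :: "real^'n::finite \<Rightarrow> real" where
  "supnorm v = Max (range (\<lambda>i. \<bar>v $ i\<bar>))"

end

theory Submission
  imports Defs
begin

lemma line_deriv:
  assumes "has_partial_on i f U" "y + t *\<^sub>R axis i 1 \<in> U"
  shows "((\<lambda>s. f (y + s *\<^sub>R axis i 1)) has_real_derivative partial i f (y + t *\<^sub>R axis i 1)) (at t)"
proof -
  let ?z = "y + t *\<^sub>R axis i 1"
  have "(\<lambda>s. f (?z + s *\<^sub>R axis i 1)) differentiable (at 0)"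
    using assms unfolding has_partial_on_def by blast
  hence "((\<lambda>s. f (?z + s *\<^sub>R axis i 1)) has_real_derivative partial i f ?z) (at 0)"
    unfolding partial_def using DERIV_deriv_iff_real_differentiable by blast
  moreover have "(\<lambda>s. f (?z + s *\<^sub>R axis i 1)) = (\<lambda>s. f (y + (s + t) *\<^sub>R axis i 1))"
    by (simp add: algebra_simps scaleR_add_left)
  ultimately show ?thesis using DERIV_shift[of "\<lambda>s. f (y + s *\<^sub>R axis i 1)" _ 0 t] by simp
qed

lemma line_mvt:
  assumes "has_partial_on i f U"
    and "\<forall>s. min 0 L \<le> s \<and> s \<le> max 0 L \<longrightarrow> y + s *\<^sub>R axis i 1 \<in> U"
  shows "\<exists>\<xi>. min 0 L \<le> \<xi> \<and> \<xi> \<le> max 0 L \<and>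
          f (y + L *\<^sub>R axis i 1) - f y = L * partial i f (y + \<xi> *\<^sub>R axis i 1)"
proof -
  have D: "\<And>s. min 0 L \<le> s \<Longrightarrow> s \<le> max 0 L \<Longrightarrow>
     ((\<lambda>s. f (y + s *\<^sub>R axis i 1)) has_real_derivative partial i f (y + s *\<^sub>R axis i 1)) (at s)"
    using line_deriv[OF assms(1)] assms(2) by blast
  consider "L > 0" | "L < 0" | "L = 0" by linarith
  then show ?thesis
  proof cases
    case 1
    obtain z where "0 < z" "z < L" "f (y + L *\<^sub>R axis i 1) - f (y + 0 *\<^sub>R axis i 1) = (L - 0) * partial i f (y + z *\<^sub>R axis i 1)"
      using MVT2[of 0 L "\<lambda>s. f (y + s *\<^sub>R axis i 1)" "\<lambda>s. partial i f (y + s *\<^sub>R axis i 1)"] 1 D by auto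
    then show ?thesis using 1 by (intro exI[of _ z]) auto
  next
    case 2
    obtain z where "L < z" "z < 0" "f (y + 0 *\<^sub>R axis i 1) - f (y + L *\<^sub>R axis i 1) = (0 - L) * partial i f (y + z *\<^sub>R axis i 1)"
      using MVT2[of L 0 "\<lambda>s. f (y + s *\<^sub>R axis i 1)" "\<lambda>s. partial i f (y + s *\<^sub>R axis i 1)"] 2 D by auto
    then show ?thesis using 2 by (intro exI[of _ z]) (auto simp: algebra_simps)
  next
    case 3 then show ?thesis by (intro exI[of _ 0]) auto
  qed
qed

lemma lip:
  fixes g :: "real^'n::finite \<Rightarrow> real"
  assumes hp: "\<forall>j. has_partial_on j g U" and bd: "\<forall>j. \<forall>z\<in>U. \<bar>partial j g z\<bar> \<le> M"
    and QU: "{z. \<forall>j. \<bar>z$j - x0$j\<bar> \<le> h} \<subseteq> U" and z: "\<forall>j. \<bar>z$j - x0$j\<bar> \<le> h"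
  shows "\<bar>g z - g x0\<bar> \<le> M * (\<Sum>j\<in>UNIV. \<bar>z$j - x0$j\<bar>)"
proof -
  define w where "w J = (\<chi> k. if k \<in> J then z$k else x0$k)" for J
  have "\<bar>g (w J) - g x0\<bar> \<le> M * (\<Sum>j\<in>J. \<bar>z$j - x0$j\<bar>)" if "finite J" for J
    using that
  proof (induction J rule: finite_induct)
    case empty
    have "w {} = x0" by (simp add: w_def vec_eq_iff)
    then show ?case by simp
  next
    case (insert j J)
    let ?L = "z$j - x0$j"
    have weq: "w (insert j J) = w J + ?L *\<^sub>R axis j 1"
      using insert.hyps by (auto simp: w_def vec_eq_iff axis_def)
    have inU: "w J + s *\<^sub>R axis j 1 \<in> U" if "min 0 ?L \<le> s" "s \<le> max 0 ?L" for s
    proof -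
      have "\<forall>k. \<bar>(w J + s *\<^sub>R axis j 1)$k - x0$k\<bar> \<le> h"
      proof
        fix k
        show "\<bar>(w J + s *\<^sub>R axis j 1)$k - x0$k\<bar> \<le> h"
          using z[rule_format, of k] z[rule_format, of j] that insert.hyps
          by (auto simp: w_def axis_def)
      qed
      then show ?thesis using QU by blast
    qed
    obtain \<xi> where xi: "min 0 ?L \<le> \<xi>" "\<xi> \<le> max 0 ?L"
      "g (w J + ?L *\<^sub>R axis j 1) - g (w J) = ?L * partial j g (w J + \<xi> *\<^sub>R axis j 1)"
      using line_mvt[of j g U ?L "w J"] hp inU by blast
    have "\<bar>partial j g (w J + \<xi> *\<^sub>R axis j 1)\<bar> \<le> M" using bd inU[OF xi(1,2)] by blast
    hence "\<bar>g (w (insert j J)) - g (w J)\<bar> \<le> \<bar>?L\<bar> * M"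
      using xi(3) weq by (simp add: abs_mult mult_left_mono)
    then show ?case using insert by (simp add: algebra_simps)
  qed
  moreover have "w UNIV = z" by (simp add: w_def vec_eq_iff)
  ultimately show ?thesis using finite_UNIV by fastforce
qed


lemma mvt_int:
  fixes f f' :: "real \<Rightarrow> real"
  assumes der: "\<forall>t\<in>{0..h}. (f has_real_derivative f' t) (at t)"
    and t: "t \<in> {0..h}" and s: "s \<in> {0..h}"
  shows "\<exists>\<xi>\<in>{0..h}. f t - f s = (t - s) * f' \<xi>"
proof -
  consider "s < t" | "t < s" | "s = t" by linarith
  then show ?thesis
  proof cases
    case 1
    then obtain z where "s < z" "z < t" "f t - f s = (t - s) * f' z"
      using MVT2[of s t f f'] der t s by fastforce
    then show ?thesis using s t by (intro bexI[of _ z]) auto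
  next
    case 2
    then obtain z where "t < z" "z < s" "f s - f t = (s - t) * f' z"
      using MVT2[of t s f f'] der t s by fastforce
    then show ?thesis using s t by (intro bexI[of _ z]) (auto simp: algebra_simps)
  next
    case 3 then show ?thesis using t by auto
  qed
qed

lemma oneD:
  fixes f f' :: "real \<Rightarrow> real"
  assumes h: "h > 0" and a: "a > 0" and dl: "\<delta> > 0"
    and der: "\<forall>t\<in>{0..h}. (f has_real_derivative f' t) (at t)"
    and bnd: "\<forall>t\<in>{0..h}. a \<le> \<bar>f' t\<bar> \<and> \<bar>f' t\<bar> \<le> b"
  shows "(\<integral>\<^sup>+t. indicator {t\<in>{0..h}. dist_int (f t) < \<delta>} t \<partial>lborel)
           \<le> ennreal ((2*b*h+3) * (4*\<delta>/a))"
proof -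
  have lo: "a * \<bar>t - s\<bar> \<le> \<bar>f t - f s\<bar>" if ts: "t \<in> {0..h}" "s \<in> {0..h}" for t s
  proof -
    obtain \<xi> where "\<xi>\<in>{0..h}" "f t - f s = (t - s) * f' \<xi>" using mvt_int[OF der ts] by blast
    then show ?thesis using bnd by (simp add: abs_mult mult_right_mono mult.commute)
  qed
  have up: "\<bar>f t - f s\<bar> \<le> b * h" if ts: "t \<in> {0..h}" "s \<in> {0..h}" for t s
  proof -
    obtain \<xi> where xi: "\<xi>\<in>{0..h}" "f t - f s = (t - s) * f' \<xi>" using mvt_int[OF der ts] by blast
    have "\<bar>t - s\<bar> \<le> h" using ts by auto
    moreover have "\<bar>f' \<xi>\<bar> \<le> b" "0 \<le> \<bar>f' \<xi>\<bar>" using bnd xi(1) by auto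
    ultimately have "\<bar>t - s\<bar> * \<bar>f' \<xi>\<bar> \<le> h * b" by (intro mult_mono) auto
    then show ?thesis using xi by (simp add: abs_mult mult.commute)
  qed
  have b0: "b \<ge> a" using bnd[rule_format, of 0] h by force
  define lo0 where "lo0 = f 0 - b*h - 1"
  define hi0 where "hi0 = f 0 + b*h + 1"
  define K where "K = {\<lceil>lo0\<rceil>..\<lfloor>hi0\<rfloor>}"
  have finK: "finite K" by (simp add: K_def)
  have cardK: "real (card K) \<le> 2*b*h+3"
  proof -
    have "card K = nat (\<lfloor>hi0\<rfloor> - \<lceil>lo0\<rceil> + 1)" by (simp add: K_def)
    moreover have "real_of_int (\<lfloor>hi0\<rfloor> - \<lceil>lo0\<rceil> + 1) \<le> 2*b*h+3"
      using of_int_floor_le[of hi0] le_of_int_ceiling[of lo0] 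
      by (simp add: lo0_def hi0_def) linarith
    moreover have "0 \<le> 2*b*h+3" using b0 a h by simp
    ultimately show ?thesis by linarith
  qed
  define \<rho> where "\<rho> = 2*\<delta>/a"
  define c where "c k = (SOME t. t \<in> {0..h} \<and> \<bar>f t - real_of_int k\<bar> < \<delta>)" for k :: int
  define I where "I k = (if \<exists>t\<in>{0..h}. \<bar>f t - real_of_int k\<bar> < \<delta> then {c k - \<rho> .. c k + \<rho>} else {})" for k
  have pt: "indicator {t\<in>{0..h}. dist_int (f t) < \<delta>} t \<le> (\<Sum>k\<in>K. indicator (I k) t :: ennreal)" for t
  proof (cases "t \<in> {0..h} \<and> dist_int (f t) < \<delta>")
    case False then show ?thesis by simp
  next
    case True
    define k0 where "k0 = round (f t)"
    have d: "\<bar>f t - real_of_int k0\<bar> < \<delta>" using True by (simp add: dist_int_def k0_def)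
    have r: "\<bar>f t - real_of_int k0\<bar> \<le> 1/2" unfolding k0_def using of_int_round_abs_le[of "f t"] by (simp add: abs_minus_commute)
    have "\<bar>f t - f 0\<bar> \<le> b*h" using up[of t 0] True h by auto
    hence "lo0 \<le> real_of_int k0" "real_of_int k0 \<le> hi0" using r unfolding lo0_def hi0_def by arith+
    hence k0K: "k0 \<in> K" unfolding K_def by (simp add: ceiling_le floor_le_iff le_floor_iff)
    have ex: "\<exists>t\<in>{0..h}. \<bar>f t - real_of_int k0\<bar> < \<delta>" using True d by blast
    hence ck: "c k0 \<in> {0..h}" "\<bar>f (c k0) - real_of_int k0\<bar> < \<delta>"
      unfolding c_def by (metis (mono_tags, lifting) someI_ex)+
    have "\<bar>f t - f (c k0)\<bar> < 2*\<delta>" using ck d by linarith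
    hence "a * \<bar>t - c k0\<bar> < 2*\<delta>" using lo[of t "c k0"] True ck by linarith
    hence "\<bar>t - c k0\<bar> < \<rho>" unfolding \<rho>_def using a by (simp add: field_simps mult.commute)
    hence "t \<in> I k0" unfolding I_def using ex by auto
    hence "indicator {t\<in>{0..h}. dist_int (f t) < \<delta>} t \<le> (indicator (I k0) t :: ennreal)"
      by (simp add: indicator_def)
    also have "\<dots> \<le> (\<Sum>k\<in>K. indicator (I k) t)"
      by (rule member_le_sum[OF k0K _ finK]) simp
    finally show ?thesis .
  qed
  have meas: "I k \<in> sets lborel" for k unfolding I_def by auto
  have emI: "emeasure lborel (I k) \<le> ennreal (4*\<delta>/a)" for k
  proof (cases "\<exists>t\<in>{0..h}. \<bar>f t - real_of_int k\<bar> < \<delta>")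
    case True
    have "\<rho> \<ge> 0" using a dl by (simp add: \<rho>_def)
    then have "emeasure lborel (I k) = ennreal (2*\<rho>)" using True by (simp add: I_def)
    then show ?thesis by (simp add: \<rho>_def)
  next
    case False then show ?thesis by (simp add: I_def)
  qed
  have "(\<integral>\<^sup>+t. indicator {t\<in>{0..h}. dist_int (f t) < \<delta>} t \<partial>lborel)
        \<le> (\<integral>\<^sup>+t. (\<Sum>k\<in>K. indicator (I k) t) \<partial>lborel)"
    by (intro nn_integral_mono pt)
  also have "\<dots> = (\<Sum>k\<in>K. emeasure lborel (I k))"
    using meas by (subst nn_integral_sum) auto
  also have "\<dots> \<le> (\<Sum>k\<in>K. ennreal (4*\<delta>/a))" by (intro sum_mono emI)
  also have "\<dots> = ennreal (real (card K) * (4*\<delta>/a))"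
    using a dl by (simp add: ennreal_of_nat_eq_real_of_nat ennreal_mult''[symmetric] del: times_divide_eq_right)
  also have "\<dots> \<le> ennreal ((2*b*h+3) * (4*\<delta>/a))"
    using cardK a dl by (intro ennreal_leI mult_right_mono) auto
  finally show ?thesis .
qed


lemma dir_bound:
  fixes c :: "real^'n::finite" and F :: "real^'n \<Rightarrow> real"
  assumes r: "r > 0" and M: "M \<ge> 1/(4*r^2)" and dl: "\<delta> > 0"
    and C2: "C2_on F (ball c (2*r))"
    and bd: "\<forall>i j. \<forall>x\<in>ball c (2*r). \<bar>partial j (partial i F) x\<bar> \<le> M"
    and Ameas[measurable]: "A \<in> sets borel"
    and A_def: "A = {x \<in> ball c r. dist_int (F x) < \<delta> \<and> sqrt (real CARD('n) * M) \<le> \<bar>partial i F x\<bar>}"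
  shows "emeasure lborel A \<le> ennreal ((24 + 48 * real CARD('n)) * \<delta>) * emeasure lborel (ball c (2*r))"
proof -
  define d where "d = real CARD('n)"
  define U where "U = ball c (2*r)"
  define g where "g = sqrt (d * M)"
  define h where "h = 1 / (2 * d * sqrt M)"
  define e where "e = (axis i 1 :: real^'n)"
  define K1 where "K1 = 24 + 48 * d"
  have d1: "d \<ge> 1" unfolding d_def by (simp add: Suc_le_eq)
  have M0: "M > 0" using M r by (smt (verit) divide_pos_pos zero_less_power)
  have sM: "sqrt M > 0" using M0 by simp
  have h0: "h > 0" using d1 sM by (simp add: h_def)
  have sMr: "1/(2*r) \<le> sqrt M"
  proof (rule real_le_rsqrt)
    show "(1/(2*r))^2 \<le> M" using M by (simp add: power_divide power_mult_distrib)
  qed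
  have dh: "d * h = 1 / (2 * sqrt M)" using d1 by (simp add: h_def)
  have dhr: "d * h \<le> r"
  proof -
    have "1 / (2 * sqrt M) \<le> r" using sMr r sM by (simp add: field_simps)
    then show ?thesis using dh by simp
  qed
  have gM: "g \<ge> sqrt M"
  proof -
    have "g = sqrt d * sqrt M" by (simp add: g_def real_sqrt_mult)
    moreover have "sqrt d \<ge> 1" using d1 by simp
    ultimately show ?thesis using sM by (simp add: mult_le_cancel_right1)
  qed
  have Mdh: "M * (d * h) = sqrt M / 2"
  proof -
    have aux: "\<And>s::real. s > 0 \<Longrightarrow> (s * s) * (1 / (2 * s)) = s / 2" by (simp add: field_simps)
    have "M = sqrt M * sqrt M" using M0 by simp
    then have "M * (d * h) = (sqrt M * sqrt M) * (1/(2* sqrt M))" using dh by metis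
    then show ?thesis using aux[OF sM] by simp
  qed
  define Q where "Q x0 = {z. \<forall>j. \<bar>z$j - x0$j\<bar> \<le> h}" for x0 :: "real^'n"
  have sumQ: "(\<Sum>j\<in>UNIV. \<bar>z$j - x0$j\<bar>) \<le> d * h" if "z \<in> Q x0" for z x0
  proof -
    have "(\<Sum>j\<in>UNIV. \<bar>z$j - x0$j\<bar>) \<le> of_nat (card (UNIV::'n set)) * h"
      by (rule sum_bounded_above) (use that in \<open>auto simp: Q_def\<close>)
    then show ?thesis by (simp add: d_def)
  qed
  have QU: "Q x0 \<subseteq> U" if "x0 \<in> ball c r" for x0
  proof
    fix z assume z: "z \<in> Q x0"
    have "dist x0 z = norm (z - x0)" by (simp add: dist_norm norm_minus_commute)
    also have "\<dots> \<le> (\<Sum>j\<in>UNIV. \<bar>(z - x0)$j\<bar>)" by (rule norm_le_l1_cart)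
    also have "\<dots> \<le> d * h" using sumQ[OF z] by simp
    finally have "dist x0 z \<le> d * h" .
    moreover have "dist c x0 < r" using that by simp
    ultimately have "dist c z < 2 * r" using dist_triangle[of c z x0] dhr by linarith
    then show "z \<in> U" by (simp add: U_def)
  qed
  have hpi: "has_partial_on i F U" using C2 by (simp add: C2_on_def U_def)
  have hpij: "\<forall>j. has_partial_on j (partial i F) U" using C2 by (simp add: C2_on_def U_def)
  have bdi: "\<forall>j. \<forall>z\<in>U. \<bar>partial j (partial i F) z\<bar> \<le> M" using bd by (simp add: U_def)
  have lipQ: "\<bar>partial i F z - partial i F x0\<bar> \<le> g / 2" if "x0 \<in> ball c r" "z \<in> Q x0" for x0 z
  proof -
    have "\<bar>partial i F z - partial i F x0\<bar> \<le> M * (\<Sum>j\<in>UNIV. \<bar>z$j - x0$j\<bar>)"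
      using lip[OF hpij bdi, of x0 h z] QU[OF that(1)] that(2) by (simp add: Q_def)
    also have "\<dots> \<le> M * (d * h)" using sumQ[OF that(2)] M0 by (simp add: mult_left_mono)
    also have "\<dots> \<le> g / 2" using Mdh gM by simp
    finally show ?thesis .
  qed
  define \<phi> where "\<phi> y t = (indicator A (y + t *\<^sub>R e) * indicator {0..h} t :: ennreal)" for y t
  have meas\<phi>: "case_prod \<phi> \<in> borel_measurable (lborel \<Otimes>\<^sub>M lborel)"
    unfolding \<phi>_def by measurable
  have pery: "(\<integral>\<^sup>+t. \<phi> y t \<partial>lborel) \<le> indicator U y * ennreal (K1 * \<delta> * h)" for y
  proof (cases "\<exists>t0\<in>{0..h}. y + t0 *\<^sub>R e \<in> A")
    case False
    then have "\<phi> y t = 0" for t by (auto simp: \<phi>_def indicator_def)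
    then show ?thesis by simp
  next
    case True
    then obtain t0 where t0: "t0 \<in> {0..h}" "y + t0 *\<^sub>R e \<in> A" by blast
    define x0 where "x0 = y + t0 *\<^sub>R e"
    have x0B: "x0 \<in> ball c r" and x0g: "g \<le> \<bar>partial i F x0\<bar>"
      using t0(2) by (auto simp: A_def x0_def g_def d_def)
    define G where "G = \<bar>partial i F x0\<bar>"
    have G0: "G > 0" using x0g gM sM unfolding G_def by linarith
    have inQ: "y + t *\<^sub>R e \<in> Q x0" if "t \<in> {0..h}" for t
      using that t0(1) by (auto simp: Q_def x0_def e_def axis_def)
    have yU: "y \<in> U" using inQ[of 0] h0 QU[OF x0B] by auto
    have near: "\<forall>t\<in>{0..h}. G/2 \<le> \<bar>partial i F (y + t *\<^sub>R e)\<bar> \<and> \<bar>partial i F (y + t *\<^sub>R e)\<bar> \<le> 3*G/2"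
    proof
      fix t assume "t \<in> {0..h}"
      then have "\<bar>partial i F (y + t *\<^sub>R e) - partial i F x0\<bar> \<le> g / 2" using lipQ[OF x0B inQ] by blast
      then show "G/2 \<le> \<bar>partial i F (y + t *\<^sub>R e)\<bar> \<and> \<bar>partial i F (y + t *\<^sub>R e)\<bar> \<le> 3*G/2"
        using x0g unfolding G_def by linarith
    qed
    have der: "\<forall>t\<in>{0..h}. ((\<lambda>s. F (y + s *\<^sub>R e)) has_real_derivative partial i F (y + t *\<^sub>R e)) (at t)"
      using line_deriv[OF hpi] inQ QU[OF x0B] unfolding e_def by blast
    have "(\<integral>\<^sup>+t. \<phi> y t \<partial>lborel) \<le> (\<integral>\<^sup>+t. indicator {t\<in>{0..h}. dist_int (F (y + t *\<^sub>R e)) < \<delta>} t \<partial>lborel)"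
      by (intro nn_integral_mono) (auto simp: \<phi>_def A_def indicator_def)
    also have "\<dots> \<le> ennreal ((2*(3*G/2)*h+3) * (4*\<delta>/(G/2)))"
      by (rule oneD[OF h0 _ dl der near]) (use G0 in simp)
    also have "\<dots> \<le> ennreal (K1 * \<delta> * h)"
    proof (rule ennreal_leI)
      have iG: "1/G \<le> 2*d*h"
      proof -
        have "2*d*h = 1 / sqrt M" using dh by (simp add: field_simps)
        moreover have "1/G \<le> 1/sqrt M" using G0 sM gM x0g unfolding G_def
          by (intro divide_left_mono) auto
        ultimately show ?thesis by simp
      qed
      have "(2*(3*G/2)*h+3) * (4*\<delta>/(G/2)) = 24*\<delta>*h + 24*\<delta>*(1/G)"
        using G0 by (simp add: field_simps)
      also have "\<dots> \<le> 24*\<delta>*h + 24*\<delta>*(2*d*h)"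
        using iG dl by (intro add_left_mono mult_left_mono) auto
      also have "\<dots> = K1 * \<delta> * h" by (simp add: K1_def algebra_simps)
      finally show "(2*(3*G/2)*h+3) * (4*\<delta>/(G/2)) \<le> K1 * \<delta> * h" .
    qed
    finally show ?thesis using yU by simp
  qed
  have trans: "(\<integral>\<^sup>+y. indicator A (y + t *\<^sub>R e) \<partial>lborel) = emeasure lborel A" for t
  proof -
    have "(\<integral>\<^sup>+y. indicator A y \<partial>(distr lborel borel ((+) (t *\<^sub>R e)))) = (\<integral>\<^sup>+y. indicator A (t *\<^sub>R e + y) \<partial>lborel)"
      by (subst nn_integral_distr) auto
    then show ?thesis by (simp add: lborel_distr_plus add.commute)
  qed
  have Pinst: "pair_sigma_finite (lborel :: (real^'n) measure) (lborel :: real measure)"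
    by (intro pair_sigma_finite.intro sigma_finite_lborel)
  have "(\<integral>\<^sup>+y. (\<integral>\<^sup>+t. \<phi> y t \<partial>lborel) \<partial>lborel) = (\<integral>\<^sup>+t. (\<integral>\<^sup>+y. \<phi> y t \<partial>lborel) \<partial>lborel)"
    by (rule pair_sigma_finite.Fubini'[OF Pinst meas\<phi>, symmetric])
  also have "\<dots> = (\<integral>\<^sup>+t. emeasure lborel A * indicator {0..h} t \<partial>lborel)"
  proof (intro nn_integral_cong)
    fix t
    have "(\<integral>\<^sup>+y. \<phi> y t \<partial>lborel) = (\<integral>\<^sup>+y. indicator A (y + t *\<^sub>R e) \<partial>lborel) * indicator {0..h} t"
      unfolding \<phi>_def by (rule nn_integral_multc) measurable
    then show "(\<integral>\<^sup>+y. \<phi> y t \<partial>lborel) = emeasure lborel A * indicator {0..h} t" using trans by simp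
  qed
  also have "\<dots> = emeasure lborel A * ennreal h"
    using h0 by (subst nn_integral_cmult_indicator) auto
  finally have eq: "(\<integral>\<^sup>+y. (\<integral>\<^sup>+t. \<phi> y t \<partial>lborel) \<partial>lborel) = emeasure lborel A * ennreal h" .
  have "(\<integral>\<^sup>+y. (\<integral>\<^sup>+t. \<phi> y t \<partial>lborel) \<partial>lborel) \<le> (\<integral>\<^sup>+y. ennreal (K1 * \<delta> * h) * indicator U y \<partial>lborel)"
    by (intro nn_integral_mono) (use pery in \<open>simp add: mult.commute\<close>)
  also have "\<dots> = ennreal (K1 * \<delta> * h) * emeasure lborel U"
    by (subst nn_integral_cmult_indicator) (auto simp: U_def)
  finally have "ennreal h * emeasure lborel A \<le> ennreal h * (ennreal (K1 * \<delta>) * emeasure lborel U)"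
    using eq h0 dl d1 by (simp add: ennreal_mult' K1_def mult.commute mult.left_commute)
  then have "emeasure lborel A \<le> ennreal (K1 * \<delta>) * emeasure lborel U"
    using h0 by (subst (asm) ennreal_mult_le_mult_iff) auto
  then show ?thesis by (simp add: K1_def d_def U_def)
qed


lemma A_meas:
  fixes c :: "real^'n::finite" and F :: "real^'n \<Rightarrow> real"
  assumes C2: "C2_on F (ball c (2*r))"
  shows "{x \<in> ball c r. dist_int (F x) < \<delta> \<and> k \<le> \<bar>partial i F x\<bar>} \<in> sets borel"
proof -
  define U where "U = ball c (2*r)"
  define F1 where "F1 x = indicator U x *\<^sub>R F x" for x
  define P1 where "P1 x = indicator U x *\<^sub>R partial i F x" for x
  have [measurable]: "F1 \<in> borel_measurable borel" unfolding F1_def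
    by (rule borel_measurable_continuous_on_indicator) (use C2 in \<open>auto simp: U_def C2_on_def\<close>)
  have [measurable]: "P1 \<in> borel_measurable borel" unfolding P1_def
    by (rule borel_measurable_continuous_on_indicator) (use C2 in \<open>auto simp: U_def C2_on_def\<close>)
  have sub: "ball c r \<subseteq> U" unfolding U_def by (auto simp: subset_eq) (smt (verit) zero_le_dist)
  have eq: "{x \<in> ball c r. dist_int (F x) < \<delta> \<and> k \<le> \<bar>partial i F x\<bar>}
     = ball c r \<inter> {x. \<bar>F1 x - real_of_int \<lfloor>F1 x + 1/2\<rfloor>\<bar> < \<delta> \<and> k \<le> \<bar>P1 x\<bar>}"
    using sub by (auto simp: F1_def P1_def dist_int_def round_def indicator_def)
  show ?thesis unfolding eq by measurable
qed

theorem lemma2p2: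
  "\<exists>C::real. C > 0 \<and>
    (\<forall>(c::real^'n::finite) (r::real) (M::real) (\<delta>::real) (F::real^'n \<Rightarrow> real).
       r > 0 \<longrightarrow> M \<ge> 1 / (4 * r^2) \<longrightarrow> \<delta> > 0 \<longrightarrow>
       C2_on F (ball c (2 * r)) \<longrightarrow>
       (\<forall>i j. \<forall>x\<in>ball c (2 * r). \<bar>partial j (partial i F) x\<bar> \<le> M) \<longrightarrow>
       (let S = {x \<in> ball c r. dist_int (F x) < \<delta> \<and>
                   supnorm (grad F x) \<ge> sqrt (real CARD('n) * M)}
        in S \<in> sets lebesgue \<and>
           measure lebesgue S \<le> C * \<delta> * measure lebesgue (ball c r)))"
proof -
  define d where "d = real CARD('n)"
  define C where "C = d * (24 + 48 * d) * 2 ^ CARD('n)"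
  have d1: "d \<ge> 1" unfolding d_def by (simp add: Suc_le_eq)
  have C0: "C > 0" using d1 by (simp add: C_def)
  have main: "S \<in> sets lebesgue \<and> measure lebesgue S \<le> C * \<delta> * measure lebesgue (ball c r)"
    if r: "r > 0" and M: "M \<ge> 1 / (4 * r^2)" and dl: "\<delta> > 0"
      and C2: "C2_on F (ball c (2 * r))"
      and bd: "\<forall>i j. \<forall>x\<in>ball c (2 * r). \<bar>partial j (partial i F) x\<bar> \<le> M"
      and S_def: "S = {x \<in> ball c r. dist_int (F x) < \<delta> \<and> supnorm (grad F x) \<ge> sqrt (real CARD('n) * M)}"
    for c :: "real^'n" and r M \<delta> F S
  proof -
    define A where "A i = {x \<in> ball c r. dist_int (F x) < \<delta> \<and> sqrt (real CARD('n) * M) \<le> \<bar>partial i F x\<bar>}" for i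
    have Ameas: "A i \<in> sets borel" for i unfolding A_def by (rule A_meas[OF C2])
    have SA: "S = (\<Union>i\<in>UNIV. A i)"
    proof -
      have "sqrt (real CARD('n) * M) \<le> supnorm (grad F x) \<longleftrightarrow> (\<exists>i. sqrt (real CARD('n) * M) \<le> \<bar>partial i F x\<bar>)" for x
        unfolding supnorm_def grad_def by (subst Max_ge_iff) auto
      then show ?thesis unfolding S_def A_def by auto
    qed
    have Sb: "S \<in> sets borel" unfolding SA using Ameas by auto
    have finU: "emeasure lborel (ball c (2*r)) < \<infinity>" by (rule emeasure_lborel_ball_finite)
    have Ai: "measure lborel (A i) \<le> (24 + 48 * d) * \<delta> * measure lborel (ball c (2*r))" for i
    proof -
      have "emeasure lborel (A i) \<le> ennreal ((24 + 48 * d) * \<delta>) * emeasure lborel (ball c (2*r))"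
        using dir_bound[OF r M dl C2 bd Ameas[of i] A_def[of i]] by (simp add: d_def)
      also have "\<dots> = ennreal ((24 + 48 * d) * \<delta> * measure lborel (ball c (2*r)))"
        using finU d1 dl by (simp add: emeasure_eq_ennreal_measure ennreal_mult')
      finally show ?thesis using d1 dl
        by (simp add: measure_def enn2real_leI)
    qed
    have "measure lborel S \<le> (\<Sum>i\<in>UNIV. measure lborel (A i))"
      unfolding SA by (rule measure_UNION_le) (use Ameas in auto)
    also have "\<dots> \<le> (\<Sum>i\<in>(UNIV::'n set). (24 + 48 * d) * \<delta> * measure lborel (ball c (2*r)))"
      by (intro sum_mono Ai)
    also have "\<dots> = d * (24 + 48 * d) * \<delta> * measure lborel (ball c (2*r))" by (simp add: d_def)
    also have "measure lborel (ball c (2*r)) = 2 ^ CARD('n) * measure lborel (ball c r)"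
    proof -
      have "measure lborel (ball c (2*r)) = (2*r) ^ DIM(real^'n) * measure lborel (ball (0::real^'n) 1)"
        using r by (intro content_ball_conv_unit_ball) auto
      moreover have "measure lborel (ball c r) = r ^ DIM(real^'n) * measure lborel (ball (0::real^'n) 1)"
        using r by (intro content_ball_conv_unit_ball) auto
      ultimately show ?thesis by (simp add: power_mult_distrib)
    qed
    also have "d * (24 + 48 * d) * \<delta> * (2 ^ CARD('n) * measure lborel (ball c r)) = C * \<delta> * measure lborel (ball c r)"
      by (simp add: C_def algebra_simps)
    finally have "measure lborel S \<le> C * \<delta> * measure lborel (ball c r)" .
    moreover have "measure lebesgue S = measure lborel S" using Sb by simp
    moreover have "measure lebesgue (ball c r) = measure lborel (ball c r)" by simp
    moreover have "S \<in> sets lebesgue" using Sb by simp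
    ultimately show ?thesis by simp
  qed
  show ?thesis unfolding Let_def
    using C0 main[OF _ _ _ _ _ refl] by blast
qed

end
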